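(* Let $\lambda_x>0$, $\lambda_y>0$, and let $X$ and $Y$ be independent random variables with $X\sim \mathrm{Poisson}(\lambda_x)$ and $Y\sim\mathrm{Poisson}(\lambda_y)$. Let $\alpha(\lambda_x,\lambda_y)=\frac{\lambda_x}{\lambda_y}\left(1-e^{-\lambda_y}\right)$. Then $$lb_{\lambda_y}(\lambda_x)\le \mathbb{E}\left[\frac{X}{X+Y+1}\right]\le ub_{\lambda_y}(\lambda_x),$$ where $$ub_{\lambda_y}(\lambda_x)=1-\frac{1}{1+\alpha(\lambda_x,\lambda_y)},\qquad lb_{\lambda_y}(\lambda_x)=\alpha(\lambda_x,\lambda_y)-\frac{\lambda_x(1+\lambda_x)}{\lambda_y}\sum_{j=1}^{\infty}\frac{(j-1)!}{\lambda_y^{j}}.$$ *)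

theory Defs
  imports "HOL-Probability.Probability"
begin

definition alpha_xy :: "real \<Rightarrow> real \<Rightarrow> real" where
  "alpha_xy lx ly = lx / ly * (1 - exp (- ly))"

definition ub_bound :: "real \<Rightarrow> real \<Rightarrow> real" where
  "ub_bound ly lx = 1 - 1 / (1 + alpha_xy lx ly)"

text \<open>The series in the lower bound has nonnegative terms; it is taken in the
  extended nonnegative reals, so its value is its true (possibly infinite) sum,
  and the lower bound is an extended real.\<close>
definition lb_bound :: "real \<Rightarrow> real \<Rightarrow> ereal" where
  "lb_bound ly lx = ereal (alpha_xy lx ly)
     - ereal (lx * (1 + lx) / ly)
       * enn2ereal (\<Sum>\<^sub>\<infinity> j\<in>{1::nat..}. ennreal (fact (j - 1) / ly ^ j))"

end

theory Submission imports Defs begin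
lemma lb_inf:
  fixes ly :: real assumes "ly > 0"
  shows "(\<Sum>\<^sub>\<infinity> j\<in>{1::nat..}. ennreal (fact (j - 1) / ly ^ j)) = \<infinity>"
proof -
  have s: "summable (\<lambda>n. ly ^ n / fact n)"
    using exp_converges[of ly] by (simp add: sums_iff divide_inverse mult.commute)
  hence z: "(\<lambda>n. ly ^ n / fact n) \<longlonglongrightarrow> 0" by (rule summable_LIMSEQ_zero)
  have "filterlim (\<lambda>n. inverse (ly ^ n / fact n)) at_top sequentially"
    by (rule filterlim_inverse_at_top[OF z]) (use assms in \<open>auto intro!: always_eventually\<close>)
  hence "filterlim (\<lambda>n. (1/ly) * inverse (ly ^ n / fact n)) at_top sequentially"
    using assms by (intro filterlim_tendsto_pos_mult_at_top[OF tendsto_const]) auto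
  hence "eventually (\<lambda>n. (1/ly) * inverse (ly ^ n / fact n) \<ge> 1) sequentially"
    by (simp add: filterlim_at_top)
  then obtain N where N: "\<And>n. n \<ge> N \<Longrightarrow> (1/ly) * inverse (ly ^ n / fact n) \<ge> 1"
    by (auto simp: eventually_sequentially)
  have ge: "ennreal (fact (j - 1) / ly ^ j) \<ge> 1" if jN: "j \<in> {Suc N..}" for j
  proof -
    obtain n where j: "j = Suc n" "n \<ge> N" using jN by (cases j) auto
    have "fact (j - 1) / ly ^ j = (1/ly) * inverse (ly ^ n / fact n)"
      using assms j by (simp add: field_simps)
    thus ?thesis using N[OF j(2)] by simp
  qed
  have "(\<Sum>\<^sub>\<infinity> j\<in>{Suc N..}. ennreal (fact (j - 1) / ly ^ j)) = \<infinity>"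
    by (rule infsum_superconst_infinite_ennreal[where b=1, OF ge]) (auto simp: infinite_Ici)
  moreover have "(\<Sum>\<^sub>\<infinity> j\<in>{Suc N..}. ennreal (fact (j - 1) / ly ^ j))
      \<le> (\<Sum>\<^sub>\<infinity> j\<in>{1::nat..}. ennreal (fact (j - 1) / ly ^ j))"
    by (rule infsum_mono_neutral) (auto simp: nonneg_summable_on_complete)
  ultimately show ?thesis by (simp add: top_unique)
qed

lemma lb_minf:
  fixes lx ly :: real assumes "lx > 0" "ly > 0"
  shows "lb_bound ly lx = - \<infinity>"
proof -
  have "lx * (1 + lx) / ly > 0" using assms by simp
  thus ?thesis unfolding lb_bound_def lb_inf[OF assms(2)] using assms by simp
qed

lemma pmf_nat_expectation_sums:
  fixes p :: "nat pmf" and g :: "nat \<Rightarrow> real"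
  assumes "\<And>n. g n \<ge> 0" and "(\<lambda>n. pmf p n * g n) sums s"
  shows "integrable (measure_pmf p) g" "measure_pmf.expectation p g = s"
proof -
  have int: "integrable (count_space UNIV) (\<lambda>n. pmf p n * g n)"
    using assms unfolding integrable_count_space_nat_iff by (simp add: sums_iff)
  thus "integrable (measure_pmf p) g"
    unfolding measure_pmf_eq_density by (subst integrable_density) auto
  have "measure_pmf.expectation p g = (\<integral>n. pmf p n * g n \<partial>count_space UNIV)"
    unfolding measure_pmf_eq_density by (subst integral_density) auto
  also have "\<dots> = s"
    using int assms by (subst integral_count_space_nat) (simp_all add: sums_iff)
  finally show "measure_pmf.expectation p g = s" .
qed

lemma poisson_mean_sums:
  fixes l :: real assumes "l > 0"
  shows "(\<lambda>n. pmf (poisson_pmf l) n * real n) sums l"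
proof -
  have e: "(\<lambda>n. l ^ n / fact n) sums exp l"
    using exp_converges[of l] by (simp add: divide_inverse mult.commute)
  have "(\<lambda>n. l * exp (-l) * (l ^ n / fact n)) sums (l * exp (-l) * exp l)"
    by (rule sums_mult[OF e])
  hence "(\<lambda>n. l * exp (-l) * (l ^ n / fact n)) sums l" by (simp add: exp_minus field_simps)
  moreover have "(\<lambda>n. l ^ Suc n / fact (Suc n) * exp (-l) * real (Suc n)) = (\<lambda>n. l * exp (-l) * (l ^ n / fact n))"
  proof
    fix n
    have "fact (Suc n) = real (Suc n) * (fact n :: real)" by (simp add: fact_Suc)
    moreover have "real (Suc n) > 0" "(fact n :: real) > 0" by auto
    moreover have "\<And>r F a e. (r::real) > 0 \<Longrightarrow> F > 0 \<Longrightarrow> (l * a) / (r * F) * e * r = l * e * (a / F)"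
      by (simp add: field_simps)
    ultimately show "l ^ Suc n / fact (Suc n) * exp (-l) * real (Suc n) = l * exp (-l) * (l ^ n / fact n)"
      by (metis power_Suc)
  qed
  ultimately have "(\<lambda>n. l ^ Suc n / fact (Suc n) * exp (-l) * real (Suc n)) sums (l + 0)" by simp
  hence "(\<lambda>n. l ^ n / fact n * exp (-l) * real n) sums l"
    by (subst (asm) sums_Suc_iff) simp
  thus ?thesis using assms by simp
qed

lemma poisson_inv_sums:
  fixes l :: real assumes "l > 0"
  shows "(\<lambda>n. pmf (poisson_pmf l) n * (1 / (real n + 1))) sums ((1 - exp (-l)) / l)"
proof -
  have e: "(\<lambda>n. l ^ n / fact n) sums exp l"
    using exp_converges[of l] by (simp add: divide_inverse mult.commute)
  have "(\<lambda>n. l ^ Suc n / fact (Suc n)) sums (exp l - 1)"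
    using e by (subst sums_Suc_iff) simp
  hence A: "(\<lambda>n. (exp (-l) / l) * (l ^ Suc n / fact (Suc n))) sums ((exp (-l) / l) * (exp l - 1))"
    by (rule sums_mult)
  have B: "(exp (-l) / l) * (exp l - 1) = (1 - exp (-l)) / l"
    using assms by (simp add: field_simps exp_minus)
  have C: "(\<lambda>n. (exp (-l) / l) * (l ^ Suc n / fact (Suc n))) = (\<lambda>n. pmf (poisson_pmf l) n * (1 / (real n + 1)))"
  proof
    fix n
    have "fact (Suc n) = real (Suc n) * (fact n :: real)" by (simp add: fact_Suc)
    moreover have "real (Suc n) > 0" "(fact n :: real) > 0" by auto
    ultimately show "(exp (-l) / l) * (l ^ Suc n / fact (Suc n)) = pmf (poisson_pmf l) n * (1 / (real n + 1))"
      using assms by (simp add: field_simps)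
  qed
  show ?thesis using A unfolding B C .
qed

lemma pair_prod_expectation:
  fixes p q :: "'a pmf" and g h :: "'a \<Rightarrow> real"
  assumes "\<And>x. g x \<ge> 0" "\<And>x. h x \<ge> 0"
    and "integrable (measure_pmf p) g" "integrable (measure_pmf q) h"
  shows "integrable (measure_pmf (pair_pmf p q)) (\<lambda>(x, y). g x * h y)"
    "measure_pmf.expectation (pair_pmf p q) (\<lambda>(x, y). g x * h y)
       = measure_pmf.expectation p g * measure_pmf.expectation q h"
proof -
  have ng: "(\<integral>\<^sup>+x. ennreal (g x) \<partial>p) = ennreal (measure_pmf.expectation p g)"
    using assms by (intro nn_integral_eq_integral) auto
  have nh: "(\<integral>\<^sup>+x. ennreal (h x) \<partial>q) = ennreal (measure_pmf.expectation q h)"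
    using assms by (intro nn_integral_eq_integral) auto
  have "(\<integral>\<^sup>+z. ennreal ((\<lambda>(x, y). g x * h y) z) \<partial>pair_pmf p q)
      = (\<integral>\<^sup>+a. \<integral>\<^sup>+b. ennreal (g a) * ennreal (h b) \<partial>q \<partial>p)"
    using assms by (simp add: nn_integral_pair_pmf' ennreal_mult)
  also have "\<dots> = (\<integral>\<^sup>+a. ennreal (g a) * (\<integral>\<^sup>+b. ennreal (h b) \<partial>q) \<partial>p)"
    by (simp add: nn_integral_cmult)
  also have "\<dots> = (\<integral>\<^sup>+a. ennreal (g a) \<partial>p) * (\<integral>\<^sup>+b. ennreal (h b) \<partial>q)"
    by (simp add: nn_integral_multc)
  also have "\<dots> = ennreal (measure_pmf.expectation p g * measure_pmf.expectation q h)"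
    using assms by (simp add: ng nh ennreal_mult integral_nonneg)
  finally have eq: "(\<integral>\<^sup>+z. ennreal ((\<lambda>(x, y). g x * h y) z) \<partial>pair_pmf p q)
      = ennreal (measure_pmf.expectation p g * measure_pmf.expectation q h)" .
  show int: "integrable (measure_pmf (pair_pmf p q)) (\<lambda>(x, y). g x * h y)"
    using assms eq by (intro integrableI_nonneg) (auto simp: case_prod_beta)
  have "ennreal (measure_pmf.expectation (pair_pmf p q) (\<lambda>(x, y). g x * h y))
      = ennreal (measure_pmf.expectation p g * measure_pmf.expectation q h)"
    using assms eq by (subst nn_integral_eq_integral[OF int, symmetric]) (auto simp: case_prod_beta)
  thus "measure_pmf.expectation (pair_pmf p q) (\<lambda>(x, y). g x * h y)
       = measure_pmf.expectation p g * measure_pmf.expectation q h"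
    using assms by (subst (asm) ennreal_inj) (auto simp: integral_nonneg case_prod_beta)
qed

lemma P1:
  fixes x a c :: real assumes "x \<ge> 0" "a > 0" "c > 0"
  shows "x / (x + c) \<le> a / (a + c) + c / (a + c)^2 * (x - a)"
proof -
  have "a / (a + c) + c / (a + c)^2 * (x - a) - x / (x + c) = c * (x - a)^2 / ((x + c) * (a + c)^2)"
  proof -
    have "a + c \<noteq> 0" "x + c \<noteq> 0" using assms by auto
    thus ?thesis by (simp add: divide_simps) (simp add: algebra_simps power2_eq_square)
  qed
  moreover have "c * (x - a)^2 / ((x + c) * (a + c)^2) \<ge> 0" using assms by simp
  ultimately show ?thesis by linarith
qed

lemma P2:
  fixes t m a :: real assumes "t \<ge> 0" "m \<ge> 0" "a > 0"
  shows "a * t / (1 + a * t) \<le> a * m / (1 + a * m) + a / (1 + a * m)^2 * (t - m)"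
proof -
  have p: "1 + a * t > 0" "1 + a * m > 0" using assms by (auto intro: add_pos_nonneg)
  have "a * m / (1 + a * m) + a / (1 + a * m)^2 * (t - m) - a * t / (1 + a * t)
        = a^2 * (t - m)^2 / ((1 + a * t) * (1 + a * m)^2)"
  proof -
    have "1 + a * t \<noteq> 0" "1 + a * m \<noteq> 0" using p by auto
    thus ?thesis by (simp add: divide_simps) (simp add: algebra_simps power2_eq_square)
  qed
  moreover have "a^2 * (t - m)^2 / ((1 + a * t) * (1 + a * m)^2) \<ge> 0" using p by simp
  ultimately show ?thesis by linarith
qed

theorem lemma2:
  fixes lx ly :: real
  assumes "lx > 0" and "ly > 0"
  defines "E \<equiv> measure_pmf.expectation (pair_pmf (poisson_pmf lx) (poisson_pmf ly))
                 (\<lambda>(x, y). real x / (real x + real y + 1))"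
  shows "lb_bound ly lx \<le> ereal E \<and> E \<le> ub_bound ly lx"
proof
  show "lb_bound ly lx \<le> ereal E" using lb_minf[OF assms(1,2)] by simp
next
  define a where "a = lx"
  define m where "m = (1 - exp (-ly)) / ly"
  define hm where "hm = a * m / (1 + a * m)"
  define d where "d = a / (1 + a * m)^2"
  define B where "B = (\<lambda>y::nat. (real y + 1) / (a + real y + 1)^2)"
  define P where "P = pair_pmf (poisson_pmf lx) (poisson_pmf ly)"
  have a0: "a > 0" using assms a_def by simp
  have m0: "m \<ge> 0" unfolding m_def using assms by (simp add: divide_nonneg_pos)
  have B0: "\<And>y. B y \<ge> 0" unfolding B_def by simp
  have B1: "\<And>y. B y \<le> 1"
  proof -
    fix y
    have "(real y + 1) \<le> (a + real y + 1)^2" using a0 by (simp add: power2_eq_square algebra_simps)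
    thus "B y \<le> 1" unfolding B_def by (simp add: divide_le_eq_1)
  qed
  have pw: "real x / (real x + real y + 1) \<le> (hm - d * m + d * (1 / (real y + 1))) + real x * B y - a * B y"
    for x y :: nat
  proof -
    have c0: "real y + 1 > 0" by simp
    have H1: "real x / (real x + (real y + 1)) \<le> a / (a + (real y + 1)) + (real y + 1) / (a + (real y + 1))^2 * (real x - a)"
      by (rule P1[OF _ a0 c0]) simp
    have H2: "a / (a + (real y + 1)) = a * (1 / (real y + 1)) / (1 + a * (1 / (real y + 1)))"
    proof -
      have "real y + 1 \<noteq> 0" "a + (real y + 1) \<noteq> 0" "(real y + 1) + a \<noteq> 0" using a0 by auto
      thus ?thesis by (simp add: divide_simps)
    qed
    have H3: "a * (1 / (real y + 1)) / (1 + a * (1 / (real y + 1))) \<le> hm + d * (1 / (real y + 1) - m)"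
      unfolding hm_def d_def by (rule P2[OF _ m0 a0]) simp
    have By: "B y = (real y + 1) / (a + (real y + 1))^2" unfolding B_def by (simp add: add.assoc)
    have Ex: "real x / (real x + real y + 1) = real x / (real x + (real y + 1))" by (simp add: add.assoc)
    have lin: "B y * (real x - a) = real x * B y - a * B y" "d * (1 / (real y + 1) - m) = d * (1 / (real y + 1)) - d * m"
      by (simp_all add: algebra_simps)
    show ?thesis using H1 H2 H3 lin unfolding Ex By[symmetric] by linarith
  qed
  have intB: "integrable (measure_pmf (poisson_pmf ly)) B"
    by (rule measure_pmf.integrable_const_bound[where B=1]) (auto simp: B0 B1)
  have intI: "integrable (measure_pmf (poisson_pmf ly)) (\<lambda>y. 1 / (real y + 1))"
    and EI: "measure_pmf.expectation (poisson_pmf ly) (\<lambda>y. 1 / (real y + 1)) = m"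
    using pmf_nat_expectation_sums[OF _ poisson_inv_sums[OF assms(2)]] m_def by auto
  have intX: "integrable (measure_pmf (poisson_pmf lx)) real"
    and EX: "measure_pmf.expectation (poisson_pmf lx) real = a"
    using pmf_nat_expectation_sums[OF _ poisson_mean_sums[OF assms(1)]] a_def by auto
  have prod: "integrable (measure_pmf P) (\<lambda>(x, y). real x * B y)"
    "measure_pmf.expectation P (\<lambda>(x, y). real x * B y) = a * measure_pmf.expectation (poisson_pmf ly) B"
    using pair_prod_expectation[of real B, OF _ B0 intX intB] EX unfolding P_def by auto
  have intP1: "integrable (measure_pmf P) (\<lambda>z. hm - d * m + d * (1 / (real (snd z) + 1)))"
  proof (rule measure_pmf.integrable_const_bound[where B="\<bar>hm - d * m\<bar> + \<bar>d\<bar>"])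
    have "norm (hm - d * m + d * (1 / (real y + 1))) \<le> \<bar>hm - d * m\<bar> + \<bar>d\<bar>" for y :: nat
    proof -
      have "\<bar>d * (1 / (real y + 1))\<bar> = \<bar>d\<bar> * (1 / (real y + 1))" by (simp add: abs_mult)
      also have "\<dots> \<le> \<bar>d\<bar> * 1" by (intro mult_left_mono) (auto simp: divide_le_eq_1)
      finally have "\<bar>d * (1 / (real y + 1))\<bar> \<le> \<bar>d\<bar>" by simp
      moreover have "\<bar>hm - d * m + d * (1 / (real y + 1))\<bar> \<le> \<bar>hm - d * m\<bar> + \<bar>d * (1 / (real y + 1))\<bar>"
        by (rule abs_triangle_ineq)
      ultimately show ?thesis by simp
    qed
    thus "AE z in measure_pmf P. norm (hm - d * m + d * (1 / (real (snd z) + 1))) \<le> \<bar>hm - d * m\<bar> + \<bar>d\<bar>"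
      by (intro AE_I2) blast
  qed simp
  have intP3: "integrable (measure_pmf P) (\<lambda>z. a * B (snd z))"
    by (rule measure_pmf.integrable_const_bound[where B="a"]) (use a0 B0 B1 in auto)
  define R where "R = (\<lambda>z::nat \<times> nat. (hm - d * m + d * (1 / (real (snd z) + 1))) + (\<lambda>(x, y). real x * B y) z - a * B (snd z))"
  have intR: "integrable (measure_pmf P) R"
    unfolding R_def by (intro Bochner_Integration.integrable_diff Bochner_Integration.integrable_add intP1 prod(1) intP3)
  have E1: "measure_pmf.expectation P (\<lambda>z. hm - d * m + d * (1 / (real (snd z) + 1))) = hm"
  proof -
    have "measure_pmf.expectation P (\<lambda>z. hm - d * m + d * (1 / (real (snd z) + 1)))
       = measure_pmf.expectation (poisson_pmf ly) (\<lambda>y. hm - d * m + d * (1 / (real y + 1)))"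
      unfolding P_def by (rule expectation_pair_pmf_snd)
    also have "\<dots> = measure_pmf.expectation (poisson_pmf ly) (\<lambda>y. hm - d * m) + measure_pmf.expectation (poisson_pmf ly) (\<lambda>y. d * (1 / (real y + 1)))"
      by (rule Bochner_Integration.integral_add) (simp, use integrable_mult_right[OF intI, of d] in simp)
    also have "\<dots> = hm - d * m + d * m"
    proof -
      have "measure_pmf.expectation (poisson_pmf ly) (\<lambda>y. d * (1 / (real y + 1))) = d * m"
        unfolding EI[symmetric] by (rule integral_mult_right_zero)
      thus ?thesis by simp
    qed
    finally show ?thesis by simp
  qed
  have E3: "measure_pmf.expectation P (\<lambda>z. a * B (snd z)) = a * measure_pmf.expectation (poisson_pmf ly) B"
    unfolding P_def by simp
  have ER: "measure_pmf.expectation P R = hm"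
  proof -
    have "measure_pmf.expectation P R =
      measure_pmf.expectation P (\<lambda>z. (hm - d * m + d * (1 / (real (snd z) + 1))) + (\<lambda>(x, y). real x * B y) z)
      - measure_pmf.expectation P (\<lambda>z. a * B (snd z))"
      unfolding R_def
      by (rule Bochner_Integration.integral_diff) (intro Bochner_Integration.integrable_add intP1 prod(1), rule intP3)
    also have "measure_pmf.expectation P (\<lambda>z. (hm - d * m + d * (1 / (real (snd z) + 1))) + (\<lambda>(x, y). real x * B y) z)
       = measure_pmf.expectation P (\<lambda>z. hm - d * m + d * (1 / (real (snd z) + 1))) + measure_pmf.expectation P (\<lambda>(x, y). real x * B y)"
      by (rule Bochner_Integration.integral_add) (rule intP1, rule prod(1))
    finally show ?thesis using E1 prod(2) E3 by (simp only:)
  qed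
  have intf: "integrable (measure_pmf P) (\<lambda>(x, y). real x / (real x + real y + 1))"
    by (rule measure_pmf.integrable_const_bound[where B=1]) (auto simp: divide_le_eq_1)
  have "E \<le> measure_pmf.expectation P R"
    unfolding E_def P_def[symmetric]
    by (rule integral_mono[OF intf intR]) (use pw in \<open>auto simp: R_def\<close>)
  also have "\<dots> = ub_bound ly lx"
  proof -
    have q: "a * m = lx / ly * (1 - exp (- ly))" unfolding a_def m_def by simp
    have "1 + a * m > 0" using a0 m0 by (simp add: add_pos_nonneg)
    hence "hm = 1 - 1 / (1 + a * m)" unfolding hm_def by (simp add: field_simps)
    thus ?thesis unfolding ER ub_bound_def alpha_xy_def q by simp
  qed
  finally show "E \<le> ub_bound ly lx" .
qed

end
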